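(* Let $G$ be a virtually abelian group and let $H\le G$ be a finite-index normal subgroup with $H\cong\mathbb{Z}^n$. Then there exists a finite generating set $S$ of $G$ (with $S=S^{-1}$, $e\notin S$) such that $\kappa(h)=0$ for every $h\in H\smallsetminus\{e\}$, where $\kappa$ is computed with respect to $S$.
   Context: For a group $G$ with finite generating set $S$ ($S=S^{-1}$, $e\notin S$), $|x|$ denotes the word length of $x\in G$ with respect to $S$. For $g\in G$ define $\mathrm{Av}(g)=\frac{1}{|S|}\sum_{a\in S}|a^{-1}ga|$, and for $g\neq e$ define the curvature $\kappa(g)=\frac{|g|-\mathrm{Av}(g)}{|g|}$. *)

theory Defs
  imports "HOL-Algebra.Algebra"
begin

definition word_length :: "('a, 'b) monoid_scheme \<Rightarrow> 'a set \<Rightarrow> 'a \<Rightarrow> nat" where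
  "word_length G S x =
     (LEAST k. \<exists>ws. length ws = k \<and> set ws \<subseteq> S \<and> foldr (\<otimes>\<^bsub>G\<^esub>) ws \<one>\<^bsub>G\<^esub> = x)"

definition Av :: "('a, 'b) monoid_scheme \<Rightarrow> 'a set \<Rightarrow> 'a \<Rightarrow> real" where
  "Av G S g = (1 / real (card S)) *
     (\<Sum>a\<in>S. real (word_length G S (inv\<^bsub>G\<^esub> a \<otimes>\<^bsub>G\<^esub> g \<otimes>\<^bsub>G\<^esub> a)))"

definition curvature :: "('a, 'b) monoid_scheme \<Rightarrow> 'a set \<Rightarrow> 'a \<Rightarrow> real" where
  "curvature G S g = (real (word_length G S g) - Av G S g) / real (word_length G S g)"

definition Zn_group :: "nat \<Rightarrow> (nat \<Rightarrow> int) monoid" where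
  "Zn_group n = product_group {..<n} (\<lambda>_. integer_group)"

end

theory Submission
  imports Defs
begin


context group begin

definition wp :: "'a list \<Rightarrow> 'a" where "wp ws = foldr (\<otimes>) ws \<one>"

lemma wp_Nil[simp]: "wp [] = \<one>" and wp_Cons[simp]: "wp (x # xs) = x \<otimes> wp xs"
  by (simp_all add: wp_def)

lemma wp_closed[simp]: "set ws \<subseteq> carrier G \<Longrightarrow> wp ws \<in> carrier G"
  by (induction ws) auto

lemma wp_append: "set u \<subseteq> carrier G \<Longrightarrow> set v \<subseteq> carrier G \<Longrightarrow> wp (u @ v) = wp u \<otimes> wp v"
  by (induction u) (auto simp: m_assoc)

lemma inv_cancel_left[simp]: "x \<in> carrier G \<Longrightarrow> y \<in> carrier G \<Longrightarrow> inv x \<otimes> (x \<otimes> y) = y"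
  by (simp add: m_assoc[symmetric])

lemma inv_cancel_left2[simp]: "x \<in> carrier G \<Longrightarrow> y \<in> carrier G \<Longrightarrow> x \<otimes> (inv x \<otimes> y) = y"
  by (simp add: m_assoc[symmetric])

lemma wp_conj: "set ws \<subseteq> carrier G \<Longrightarrow> g \<in> carrier G \<Longrightarrow>
   wp (map (\<lambda>s. g \<otimes> s \<otimes> inv g) ws) = g \<otimes> wp ws \<otimes> inv g"
  by (induction ws) (auto simp: m_assoc)

lemma wp_inv: "set ws \<subseteq> carrier G \<Longrightarrow> wp (rev (map (\<lambda>x. inv x) ws)) = inv (wp ws)"
proof (induction ws)
  case (Cons a ws)
  have "set (rev (map (\<lambda>x. inv x) ws)) \<subseteq> carrier G" using Cons.prems by auto
  then show ?case using Cons by (simp add: wp_append inv_mult_group)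
qed simp

lemma gen_words:
  assumes "S \<subseteq> carrier G" "\<forall>s\<in>S. inv s \<in> S" "x \<in> generate G S"
  shows "\<exists>ws. set ws \<subseteq> S \<and> wp ws = x"
  using assms(3)
proof (induction rule: generate.induct)
  case one then show ?case by (intro exI[of _ "[]"]) auto
next
  case (incl h) then show ?case using assms by (intro exI[of _ "[h]"]) auto
next
  case (inv h) then show ?case using assms by (intro exI[of _ "[inv h]"]) auto
next
  case (eng h1 h2)
  then obtain u v where "set u \<subseteq> S" "wp u = h1" "set v \<subseteq> S" "wp v = h2" by blast
  then show ?case using assms(1) by (intro exI[of _ "u @ v"]) (auto simp: wp_append)
qed

lemma pigeon:
  assumes HN: "H \<lhd> G" and "finite (rcosets H)" "card (rcosets H) < length ws" "set ws \<subseteq> carrier G"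
  shows "\<exists>u b v. ws = u @ b @ v \<and> b \<noteq> [] \<and> length b \<le> card (rcosets H) \<and> wp b \<in> H"
proof -
  note False = assms(3)
  have sg: "subgroup H G" using HN normal_imp_subgroup by blast
  define N where "N = card (rcosets H)"
  define f where "f i = H #> wp (take i ws)" for i
  have sub: "set (take i ws) \<subseteq> carrier G" for i using assms(4) by (meson in_set_takeD subset_iff)
  have "f ` {0..N} \<subseteq> rcosets H"
    unfolding f_def using sub by (auto intro!: rcosetsI subgroup.subset[OF sg])
  have "\<not> inj_on f {0..N}"
  proof
    assume "inj_on f {0..N}"
    then have "card {0..N} \<le> card (rcosets H)"
      using card_inj_on_le[OF _ \<open>f ` {0..N} \<subseteq> rcosets H\<close> assms(2)] by blast
    then show False unfolding N_def by simp
  qed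
  then obtain i j where ij: "i \<in> {0..N}" "j \<in> {0..N}" "i < j" "f i = f j"
    unfolding inj_on_def by (metis linorder_neqE_nat)
  define u where "u = take i ws"
  define b where "b = drop i (take j ws)"
  define v where "v = drop j ws"
  have tj: "take j ws = u @ b" unfolding u_def b_def
    by (metis append_take_drop_id min.absorb1 ij(3) less_imp_le take_take)
  have ws: "ws = u @ b @ v" using tj unfolding v_def by (metis append.assoc append_take_drop_id)
  have lb: "length b = j - i" using False ij unfolding b_def N_def by auto
  have su: "set u \<subseteq> carrier G" "set b \<subseteq> carrier G" using ws assms(4) by auto
  have "wp (take j ws) = wp u \<otimes> wp b" using tj su by (simp add: wp_append)
  have "wp (take j ws) \<in> H #> wp u"
    using ij(4) repr_independenceD[OF sg, of "wp (take j ws)" "wp (take i ws)"] sub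
    unfolding f_def u_def by auto
  then have "wp u \<otimes> wp b \<otimes> inv (wp u) \<in> H"
    using subgroup.rcos_module_imp[OF sg is_group, of "wp u"] su
    \<open>wp (take j ws) = wp u \<otimes> wp b\<close> by auto
  then have "inv (wp u) \<otimes> (wp u \<otimes> wp b \<otimes> inv (wp u)) \<otimes> wp u \<in> H"
    using normal.inv_op_closed1[OF HN] su by simp
  then have "wp b \<in> H" using su by (simp add: m_assoc)
  then show ?thesis using ws lb ij unfolding N_def by (intro exI[of _ u] exI[of _ b] exI[of _ v]) auto
qed


lemma wl_def': "word_length G S x = (LEAST k. \<exists>ws. length ws = k \<and> set ws \<subseteq> S \<and> wp ws = x)"
  by (simp add: word_length_def wp_def)

lemma conj_finite:
  assumes HN: "H \<lhd> G" and fin: "finite (rcosets H)" and ab: "\<forall>x\<in>H. \<forall>y\<in>H. x \<otimes> y = y \<otimes> x"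
    and b: "b \<in> H"
  shows "finite {g \<otimes> b \<otimes> inv g | g. g \<in> carrier G}"
proof -
  have sg: "subgroup H G" using HN normal_imp_subgroup by blast
  define \<phi> where "\<phi> C = (SOME r. r \<in> C) \<otimes> b \<otimes> inv (SOME r. r \<in> C)" for C
  have "{g \<otimes> b \<otimes> inv g | g. g \<in> carrier G} \<subseteq> \<phi> ` (rcosets H)"
  proof safe
    fix g assume g: "g \<in> carrier G"
    define C where "C = H #> g"
    have C: "C \<in> rcosets H" unfolding C_def using g sg by (simp add: rcosetsI subgroup.subset)
    have "g \<in> C" unfolding C_def using rcos_self[OF g sg] .
    then have r: "(SOME r. r \<in> C) \<in> C" by (rule someI)
    then obtain k where k: "k \<in> H" "(SOME r. r \<in> C) = k \<otimes> g" unfolding C_def r_coset_def by auto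
    have kc: "k \<in> carrier G" using k sg subgroup.subset by blast
    have bc: "b \<in> carrier G" using b sg subgroup.subset by blast
    have c: "g \<otimes> b \<otimes> inv g \<in> H" using normal.inv_op_closed2[OF HN g b] .
    have cc: "g \<otimes> b \<otimes> inv g \<in> carrier G" using g bc by simp
    have "\<phi> C = k \<otimes> (g \<otimes> b \<otimes> inv g) \<otimes> inv k"
      unfolding \<phi>_def k(2) using kc g bc by (simp add: m_assoc inv_mult_group)
    also have "\<dots> = (g \<otimes> b \<otimes> inv g) \<otimes> k \<otimes> inv k" using ab k(1) c by simp
    also have "\<dots> = g \<otimes> b \<otimes> inv g" using kc cc by (simp add: m_assoc)
    finally show "g \<otimes> b \<otimes> inv g \<in> \<phi> ` (rcosets H)" using C by (metis image_eqI)
  qed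
  then show ?thesis using fin finite_subset by blast
qed

lemma core:
  assumes HN: "H \<lhd> G" and fin: "finite (rcosets H)" and ab: "\<forall>x\<in>H. \<forall>y\<in>H. x \<otimes> y = y \<otimes> x"
    and F: "finite F" "F \<subseteq> carrier G" "generate G F = carrier G"
  shows "\<exists>S. finite S \<and> S \<subseteq> carrier G \<and> (\<forall>s\<in>S. inv s \<in> S) \<and> \<one> \<notin> S
           \<and> generate G S = carrier G
           \<and> (\<forall>h\<in>H - {\<one>}. curvature G S h = 0)"
proof -
  have sg: "subgroup H G" using HN normal_imp_subgroup by blast
  have Hc: "H \<subseteq> carrier G" using sg subgroup.subset by blast
  define N where "N = card (rcosets H)"
  define Fs where "Fs = F \<union> (\<lambda>x. inv x) ` F"
  define B where "B = wp ` {ws. set ws \<subseteq> Fs \<and> length ws \<le> N}"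
  define SH where "SH = {g \<otimes> b \<otimes> inv g | g b. g \<in> carrier G \<and> b \<in> B \<and> b \<in> H \<and> b \<noteq> \<one>}"
  define S where "S = (Fs - H) \<union> SH"
  have Fsc: "Fs \<subseteq> carrier G" using F(2) unfolding Fs_def by auto
  have Fsf: "finite Fs" using F(1) unfolding Fs_def by auto
  have Fsinv: "inv x \<in> Fs" if "x \<in> Fs" for x using that F(2) unfolding Fs_def by auto
  have Bf: "finite B" unfolding B_def using finite_lists_length_le[OF Fsf] by blast
  have Bc: "B \<subseteq> carrier G" unfolding B_def using Fsc by auto
  have SHc: "SH \<subseteq> H" unfolding SH_def using normal.inv_op_closed2[OF HN] by auto
  have SHconj: "g \<otimes> s \<otimes> inv g \<in> SH" if gs: "g \<in> carrier G" "s \<in> SH" for g s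
  proof -
    obtain g' b where s: "s = g' \<otimes> b \<otimes> inv g'" "g' \<in> carrier G" "b \<in> B" "b \<in> H" "b \<noteq> \<one>"
      using gs(2) unfolding SH_def by blast
    have "g \<otimes> s \<otimes> inv g = (g \<otimes> g') \<otimes> b \<otimes> inv (g \<otimes> g')"
      using s gs(1) subsetD[OF Bc s(3)] by (simp add: m_assoc inv_mult_group)
    then show ?thesis unfolding SH_def using s gs(1) by blast
  qed
  have SHf: "finite SH"
  proof -
    have "SH = (\<Union>b\<in>B \<inter> H - {\<one>}. {g \<otimes> b \<otimes> inv g | g. g \<in> carrier G})" unfolding SH_def by blast
    then show ?thesis using Bf conj_finite[OF HN fin ab] by auto
  qed
  have Sf: "finite S" unfolding S_def using Fsf SHf by auto
  have Sc: "S \<subseteq> carrier G" unfolding S_def using Fsc SHc Hc by auto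
  have Sinv: "\<forall>s\<in>S. inv s \<in> S"
  proof
    fix s assume "s \<in> S"
    then consider "s \<in> Fs" "s \<notin> H" | "s \<in> SH" unfolding S_def by blast
    then show "inv s \<in> S"
    proof cases
      case 1
      then have "inv s \<notin> H" using sg Fsc by (metis subgroup.m_inv_closed inv_inv subsetD)
      then show ?thesis using 1 Fsinv unfolding S_def by blast
    next
      case 2
      then obtain g b ws where s: "s = g \<otimes> b \<otimes> inv g" "g \<in> carrier G" "b = wp ws" "set ws \<subseteq> Fs"
          "length ws \<le> N" "b \<in> H" "b \<noteq> \<one>"
        unfolding SH_def B_def by blast
      have ws: "set ws \<subseteq> carrier G" using s Fsc by auto
      have "inv b = wp (rev (map (\<lambda>x. inv x) ws))" using wp_inv[OF ws] s by simp
      moreover have "set (rev (map (\<lambda>x. inv x) ws)) \<subseteq> Fs" using s Fsinv by auto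
      ultimately have "inv b \<in> B" unfolding B_def using s by auto
      moreover have "inv b \<in> H" "inv b \<noteq> \<one>" using s sg ws
        by (auto simp: subgroup.m_inv_closed)
      moreover have "inv s = g \<otimes> inv b \<otimes> inv g" using s ws by (simp add: inv_mult_group m_assoc)
      ultimately show ?thesis unfolding S_def SH_def using s by blast
    qed
  qed
  have one: "\<one> \<notin> S"
  proof
    assume "\<one> \<in> S"
    moreover have "\<one> \<in> H" using sg subgroup.one_closed by blast
    ultimately obtain g b where gb: "\<one> = g \<otimes> b \<otimes> inv g" "g \<in> carrier G" "b \<in> B" "b \<noteq> \<one>"
      unfolding S_def SH_def by blast
    have bc: "b \<in> carrier G" using gb Bc by auto
    have "b = inv g \<otimes> (g \<otimes> b \<otimes> inv g) \<otimes> g" using gb(2) bc by (simp add: m_assoc)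
    also have "\<dots> = \<one>" using gb(2) by (simp add: gb(1)[symmetric])
    finally show False using gb(4) by simp
  qed
  have gen: "generate G S = carrier G"
  proof
    show "generate G S \<subseteq> carrier G" using generate_in_carrier[OF Sc] by blast
    have "F \<subseteq> generate G S"
    proof
      fix f assume f: "f \<in> F"
      have fc: "f \<in> carrier G" using f F(2) by auto
      show "f \<in> generate G S"
      proof (cases "f \<in> H")
        case False then show ?thesis using f unfolding S_def Fs_def by (auto intro: generate.incl)
      next
        case True
        show ?thesis
        proof (cases "f = \<one>")
          case True then show ?thesis by (simp add: generate.one)
        next
          case False
          have "H \<in> rcosets H" using subgroup.subgroup_in_rcosets[OF sg is_group] .
          then have "N \<noteq> 0" unfolding N_def using fin by auto
          moreover have "set [f] \<subseteq> Fs" using f unfolding Fs_def by auto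
          ultimately have "set [f] \<subseteq> Fs" "length [f] \<le> N" by auto
          moreover have "f = wp [f]" using fc by simp
          ultimately have "f \<in> B" unfolding B_def by blast
          then have "\<one> \<otimes> f \<otimes> inv \<one> \<in> SH" unfolding SH_def using True False by blast
          then have "f \<in> SH" using fc by simp
          then show ?thesis unfolding S_def by (auto intro: generate.incl)
        qed
      qed
    qed
    then have "generate G F \<subseteq> generate G S"
      using generate_subgroup_incl[OF _ generate_is_subgroup[OF Sc]] by blast
    then show "carrier G \<subseteq> generate G S" using F(3) by simp
  qed
  have SHS: "SH \<subseteq> S" unfolding S_def by auto
  have SHI: "g \<otimes> b \<otimes> inv g \<in> SH" if "b \<in> B" "b \<in> H" "b \<noteq> \<one>" "g \<in> carrier G" for g b
    unfolding SH_def using that by blast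
  have SHcar: "SH \<subseteq> carrier G" using SHc Hc by auto
  have rw: "\<forall>ws. length ws = m \<longrightarrow> set ws \<subseteq> S \<longrightarrow> wp ws \<in> H \<longrightarrow>
      (\<exists>ws'. set ws' \<subseteq> SH \<and> length ws' \<le> length ws \<and> wp ws' = wp ws)" for m
  proof (induction m rule: less_induct)
    case (less m)
    show ?case
    proof (intro allI impI)
      fix ws assume len: "length ws = m" and wsS: "set ws \<subseteq> S" and wH: "wp ws \<in> H"
      have wsc: "set ws \<subseteq> carrier G" using wsS Sc by auto
      have step: "\<exists>ws'. set ws' \<subseteq> SH \<and> length ws' \<le> length ws \<and> wp ws' = wp ws"
        if dec: "ws = u @ b @ v" "b \<noteq> []" "wp b \<in> H" "wp b = \<one> \<or> wp u \<otimes> wp b \<otimes> inv (wp u) \<in> SH"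
        for u b v
      proof -
        have uc: "set u \<subseteq> carrier G" "set b \<subseteq> carrier G" "set v \<subseteq> carrier G" using dec wsc by auto
        define c where "c = wp u \<otimes> wp b \<otimes> inv (wp u)"
        have cc: "c \<in> carrier G" unfolding c_def using uc by simp
        have eq: "c \<otimes> wp (u @ v) = wp ws"
          unfolding c_def dec(1) using uc by (simp add: wp_append m_assoc)
        have uvH: "wp (u @ v) \<in> H"
        proof -
          have "wp (u @ v) = inv c \<otimes> wp ws" using eq cc uc by (metis wp_closed inv_cancel_left set_append Un_subset_iff)
          moreover have "c \<in> H" unfolding c_def using normal.inv_op_closed2[OF HN] uc dec(3) by simp
          ultimately show ?thesis using wH sg by (simp add: subgroup.m_closed subgroup.m_inv_closed)
        qed
        have lb0: "length b > 0" using dec(2) by simp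
        moreover have "length ws = length u + length b + length v" by (simp add: dec(1))
        ultimately have "length (u @ v) < m" using len by simp
        moreover have "set (u @ v) \<subseteq> S" using dec wsS by auto
        ultimately obtain ws'' where w'': "set ws'' \<subseteq> SH" "length ws'' \<le> length (u @ v)" "wp ws'' = wp (u @ v)"
          using less.IH uvH by blast
        show ?thesis
        proof (cases "wp b = \<one>")
          case True
          then have "c = \<one>" unfolding c_def using uc by simp
          then show ?thesis using w'' eq dec uc by (intro exI[of _ ws'']) (auto simp: wp_append)
        next
          case False
          then have "c \<in> SH" unfolding c_def using dec(4) by simp
          then show ?thesis using w'' eq dec uc lb0 by (intro exI[of _ "c # ws''"]) (auto simp: wp_append simp del: length_greater_0_conv)
        qed
      qed
      show "\<exists>ws'. set ws' \<subseteq> SH \<and> length ws' \<le> length ws \<and> wp ws' = wp ws"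
      proof (cases "\<exists>s\<in>set ws. s \<in> SH")
        case True
        then obtain s where s: "s \<in> set ws" "s \<in> SH" by blast
        then obtain u v where uv: "ws = u @ s # v" by (meson split_list)
        have "wp u \<otimes> wp [s] \<otimes> inv (wp u) \<in> SH" using SHconj[of "wp u" s] s uv wsc SHcar by auto
        moreover have sc: "s \<in> carrier G" using s SHcar by auto
        ultimately have d4: "wp [s] = \<one> \<or> wp u \<otimes> wp [s] \<otimes> inv (wp u) \<in> SH" by blast
        have d1: "ws = u @ [s] @ v" using uv by simp
        have d3: "wp [s] \<in> H" using sc s(2) SHc by auto
        show ?thesis using step[OF d1 _ d3 d4] by simp
      next
        case False
        then have wsF: "set ws \<subseteq> Fs" using wsS unfolding S_def by auto
        show ?thesis
        proof (cases "ws = []")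
          case True then show ?thesis by auto
        next
          case nonempty: False
          show ?thesis
          proof (cases "length ws \<le> N")
            case True
            have "wp ws \<in> B" unfolding B_def using wsF True by auto
            then have "wp ws = \<one> \<or> wp [] \<otimes> wp ws \<otimes> inv (wp []) \<in> SH"
              using SHI[of "wp ws" \<one>] wH by auto
            then show ?thesis using step[of "[]" ws "[]"] nonempty wH by auto
          next
            case False
            then obtain u b v where d: "ws = u @ b @ v" "b \<noteq> []" "length b \<le> N" "wp b \<in> H"
              using pigeon[OF HN fin _ wsc] False unfolding N_def by auto
            have "set b \<subseteq> Fs" using d wsF by auto
            then have "wp b \<in> B" unfolding B_def using d by auto
            moreover have "wp u \<in> carrier G" using d wsc by auto
            ultimately have "wp b = \<one> \<or> wp u \<otimes> wp b \<otimes> inv (wp u) \<in> SH"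
              using SHI[of "wp b" "wp u"] d by blast
            then show ?thesis using step[OF d(1,2,4)] by auto
          qed
        qed
      qed
    qed
  qed
  have words: "\<exists>ws. set ws \<subseteq> S \<and> wp ws = x" if "x \<in> carrier G" for x
    using gen_words[OF Sc Sinv] gen that by auto
  have wl_le: "word_length G S x \<le> length ws" if "set ws \<subseteq> S" "wp ws = x" for ws x
    unfolding wl_def' by (rule Least_le) (use that in auto)
  have wl_ex: "\<exists>ws. length ws = word_length G S x \<and> set ws \<subseteq> S \<and> wp ws = x" if "x \<in> carrier G" for x
    unfolding wl_def' by (rule LeastI_ex) (use words[OF that] in auto)
  have conj_le: "word_length G S (g \<otimes> h \<otimes> inv g) \<le> word_length G S h" if hg: "h \<in> H" "g \<in> carrier G" for g h
  proof -
    obtain ws where ws: "length ws = word_length G S h" "set ws \<subseteq> S" "wp ws = h"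
      using wl_ex[of h] hg Hc by auto
    obtain ws' where ws': "set ws' \<subseteq> SH" "length ws' \<le> length ws" "wp ws' = h"
      using rw ws hg by blast
    have "wp (map (\<lambda>s. g \<otimes> s \<otimes> inv g) ws') = g \<otimes> h \<otimes> inv g"
      using wp_conj[of ws' g] ws' SHcar hg by auto
    moreover have "set (map (\<lambda>s. g \<otimes> s \<otimes> inv g) ws') \<subseteq> S" using ws' SHconj hg SHS by auto
    ultimately have "word_length G S (g \<otimes> h \<otimes> inv g) \<le> length ws'" using wl_le by fastforce
    then show ?thesis using ws ws' by simp
  qed
  have conj_eq: "word_length G S (inv a \<otimes> h \<otimes> a) = word_length G S h" if "h \<in> H" "a \<in> carrier G" for a h
  proof (rule antisym)
    show "word_length G S (inv a \<otimes> h \<otimes> a) \<le> word_length G S h"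
      using conj_le[of h "inv a"] that by simp
    have k: "inv a \<otimes> h \<otimes> a \<in> H" using normal.inv_op_closed1[OF HN] that by simp
    have "a \<otimes> (inv a \<otimes> h \<otimes> a) \<otimes> inv a = h" using that Hc by (auto simp: m_assoc)
    then show "word_length G S h \<le> word_length G S (inv a \<otimes> h \<otimes> a)"
      using conj_le[OF k that(2)] by simp
  qed
  have curv: "curvature G S h = 0" if hH: "h \<in> H" for h
  proof (cases "word_length G S h = 0")
    case True then show ?thesis unfolding curvature_def by simp
  next
    case False
    obtain ws where ws: "length ws = word_length G S h" "set ws \<subseteq> S" "wp ws = h"
      using wl_ex[of h] hH Hc by auto
    then have "S \<noteq> {}" using False by (cases ws) auto
    then have cS: "card S > 0" using Sf by (simp add: card_gt_0_iff)
    have "(\<Sum>a\<in>S. real (word_length G S (inv a \<otimes> h \<otimes> a))) = (\<Sum>a\<in>S. real (word_length G S h))"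
      using conj_eq hH Sc by (intro sum.cong) auto
    then have "Av G S h = real (word_length G S h)" unfolding Av_def using cS by simp
    then show ?thesis unfolding curvature_def by simp
  qed
  show ?thesis
    apply (rule exI[of _ S])
    using Sf Sc Sinv one gen curv by simp
qed
end

lemma Zn_group_group: "group (Zn_group n)"
  unfolding Zn_group_def by simp

lemma Zn_gen:
  "generate (Zn_group n) ((\<lambda>j. (\<lambda>i\<in>{..<n}. if i = j then (1::int) else 0)) ` {..<n}) = carrier (Zn_group n)"
  (is "generate ?Z ?E = _")
proof -
  interpret Z: group ?Z by (rule Zn_group_group)
  have Ec: "?E \<subseteq> carrier ?Z" unfolding Zn_group_def by auto
  have sgr: "subgroup (generate ?Z ?E) ?Z" using Z.generate_is_subgroup[OF Ec] .
  define c where "c j k = (\<lambda>i\<in>{..<n}. if i = j then k else (0::int))" for j k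
  have cc: "c j k \<in> carrier ?Z" for j k unfolding c_def Zn_group_def by auto
  have one: "\<one>\<^bsub>?Z\<^esub> = (\<lambda>i\<in>{..<n}. 0)" unfolding Zn_group_def by simp
  have mult: "x \<otimes>\<^bsub>?Z\<^esub> y = (\<lambda>i\<in>{..<n}. x i + y i)" for x y unfolding Zn_group_def by simp
  have cnat: "c j (int k) \<in> generate ?Z ?E" if j: "j < n" for j k
  proof (induction k)
    case 0
    have "c j (int 0) = \<one>\<^bsub>?Z\<^esub>" unfolding one c_def by auto
    then show ?case using generate.one by metis
  next
    case (Suc k)
    have "c j (int (Suc k)) = c j (int k) \<otimes>\<^bsub>?Z\<^esub> c j 1" unfolding mult c_def by (auto intro!: ext)
    moreover have "c j 1 \<in> generate ?Z ?E" unfolding c_def using j by (auto intro!: generate.incl)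
    ultimately show ?case using Suc generate.eng by metis
  qed
  have cint: "c j k \<in> generate ?Z ?E" if j: "j < n" for j k
  proof (cases "k \<ge> 0")
    case True then show ?thesis using cnat[OF j, of "nat k"] by simp
  next
    case False
    have "c j k = inv\<^bsub>?Z\<^esub> (c j (int (nat (-k))))"
      using False cc unfolding Zn_group_def c_def by (subst inv_product_group) (auto intro!: ext)
    moreover have "inv\<^bsub>?Z\<^esub> (c j (int (nat (-k)))) \<in> generate ?Z ?E"
      using subgroup.m_inv_closed[OF sgr cnat[OF j]] by blast
    ultimately show ?thesis by metis
  qed
  show ?thesis
  proof
    show "generate ?Z ?E \<subseteq> carrier ?Z" using Z.generate_in_carrier[OF Ec] by blast
    show "carrier ?Z \<subseteq> generate ?Z ?E"
    proof
      fix f assume f: "f \<in> carrier ?Z"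
      define g where "g m = (\<lambda>i\<in>{..<n}. if i < m then f i else 0)" for m
      have "g m \<in> generate ?Z ?E" for m
      proof (induction m)
        case 0
        have "g 0 = \<one>\<^bsub>?Z\<^esub>" unfolding one g_def by auto
        then show ?case using generate.one by metis
      next
        case (Suc m)
        show ?case
        proof (cases "m < n")
          case True
          have "g (Suc m) = g m \<otimes>\<^bsub>?Z\<^esub> c m (f m)" unfolding mult g_def c_def by (auto intro!: ext)
          then show ?thesis using Suc cint[OF True] generate.eng by metis
        next
          case False
          have "g (Suc m) = g m" unfolding g_def using False by (auto intro!: ext)
          then show ?thesis using Suc by simp
        qed
      qed
      moreover have "g n = f" using f unfolding g_def Zn_group_def by (auto intro!: ext simp: PiE_def extensional_def)
      ultimately show "f \<in> generate ?Z ?E" by metis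
    qed
  qed
qed

lemma (in group) main_in:
  assumes "H \<lhd> G"
    and "finite (rcosets H)"
    and "G\<lparr>carrier := H\<rparr> \<cong> Zn_group n"
  shows "\<exists>S. finite S \<and> S \<subseteq> carrier G \<and> (\<forall>s\<in>S. inv s \<in> S) \<and> \<one> \<notin> S
           \<and> generate G S = carrier G
           \<and> (\<forall>h\<in>H - {\<one>}. curvature G S h = 0)"
proof -
  have sg: "subgroup H G" using assms(1) normal_imp_subgroup by blast
  have Hc: "H \<subseteq> carrier G" using sg subgroup.subset by blast
  define G' where "G' = G\<lparr>carrier := H\<rparr>"
  have G'g: "group G'" unfolding G'_def using subgroup.subgroup_is_group[OF sg is_group] .
  obtain \<phi> where phi: "\<phi> \<in> iso G' (Zn_group n)" using assms(3) unfolding is_iso_def G'_def by blast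
  have phihom: "\<phi> \<in> hom G' (Zn_group n)" using phi by (rule iso_imp_homomorphism)
  have inj: "inj_on \<phi> H" using phi unfolding iso_iff G'_def by simp
  have ab: "\<forall>x\<in>H. \<forall>y\<in>H. x \<otimes> y = y \<otimes> x"
  proof (intro ballI)
    fix x y assume xy: "x \<in> H" "y \<in> H"
    have "\<phi> (x \<otimes> y) = \<phi> x \<otimes>\<^bsub>Zn_group n\<^esub> \<phi> y"
      using hom_mult[OF phihom, of x y] xy unfolding G'_def by simp
    also have "\<dots> = \<phi> y \<otimes>\<^bsub>Zn_group n\<^esub> \<phi> x" unfolding Zn_group_def by (simp add: add.commute)
    also have "\<dots> = \<phi> (y \<otimes> x)"
      using hom_mult[OF phihom, of y x] xy unfolding G'_def by simp
    finally show "x \<otimes> y = y \<otimes> x"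
      using inj xy sg by (simp add: inj_on_eq_iff subgroup.m_closed)
  qed
  define \<psi> where "\<psi> = inv_into (carrier G') \<phi>"
  have psi: "\<psi> \<in> iso (Zn_group n) G'" unfolding \<psi>_def using group.iso_set_sym[OF G'g phi] .
  have gh: "group_hom (Zn_group n) G' \<psi>"
    using psi Zn_group_group G'g by (simp add: group_hom_def group_hom_axioms_def iso_imp_homomorphism)
  define E where "E = (\<lambda>j. (\<lambda>i\<in>{..<n}. if i = j then (1::int) else 0)) ` {..<n}"
  have Ec: "E \<subseteq> carrier (Zn_group n)" unfolding E_def Zn_group_def by auto
  have "generate G' (\<psi> ` E) = \<psi> ` carrier (Zn_group n)"
    using group_hom.generate_img[OF gh Ec] Zn_gen unfolding E_def by simp
  also have "\<dots> = H" using psi unfolding iso_iff G'_def by simp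
  finally have genH: "generate G' (\<psi> ` E) = H" .
  have psiE: "\<psi> ` E \<subseteq> H" using psi Ec unfolding iso_iff G'_def by auto
  have genH2: "generate G (\<psi> ` E) = H" using genH generate_consistent[OF psiE sg] unfolding G'_def by simp
  define R where "R = (\<lambda>C. SOME r. r \<in> C) ` (rcosets H)"
  define F where "F = \<psi> ` E \<union> R"
  have Rc: "R \<subseteq> carrier G"
  proof
    fix r assume "r \<in> R"
    then obtain C where C: "C \<in> rcosets H" "r = (SOME r. r \<in> C)" unfolding R_def by blast
    then obtain g where g: "g \<in> carrier G" "C = H #> g" unfolding RCOSETS_def by blast
    have "g \<in> C" using g rcos_self[OF g(1) sg] by simp
    then have "r \<in> C" using C(2) by (metis someI)
    then show "r \<in> carrier G" using g r_coset_subset_G[OF Hc g(1)] by auto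
  qed
  have Ff: "finite F" unfolding F_def E_def R_def using assms(2) by simp
  have Fc: "F \<subseteq> carrier G" unfolding F_def using psiE Hc Rc by auto
  have genF: "generate G F = carrier G"
  proof
    show "generate G F \<subseteq> carrier G" using generate_in_carrier[OF Fc] by blast
    show "carrier G \<subseteq> generate G F"
    proof
      fix x assume x: "x \<in> carrier G"
      have sgF: "subgroup (generate G F) G" using generate_is_subgroup[OF Fc] .
      have HF: "H \<subseteq> generate G F"
        using genH2 generate_subgroup_incl[OF _ sgF, of "\<psi> ` E"] generate.incl[of _ F G]
        unfolding F_def by blast
      define C where "C = H #> x"
      have C: "C \<in> rcosets H" unfolding C_def using x Hc by (simp add: rcosetsI)
      define r where "r = (SOME r. r \<in> C)"
      have "x \<in> C" unfolding C_def using rcos_self[OF x sg] .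
      then have rC: "r \<in> C" unfolding r_def by (metis someI)
      then obtain k where k: "k \<in> H" "r = k \<otimes> x" unfolding C_def r_coset_def by auto
      have kc: "k \<in> carrier G" using k Hc by auto
      have "r \<in> R" unfolding R_def r_def using C by blast
      then have rF: "r \<in> generate G F" unfolding F_def by (auto intro: generate.incl)
      have "inv k \<in> generate G F" using HF k sg by (auto simp: subgroup.m_inv_closed)
      then have "inv k \<otimes> r \<in> generate G F" using rF subgroup.m_closed[OF sgF] by blast
      moreover have "inv k \<otimes> r = x" using k kc x by simp
      ultimately show "x \<in> generate G F" by simp
    qed
  qed
  show ?thesis using core[OF assms(1,2) ab Ff Fc genF] .
qed
theorem mainTheorem2:
  fixes G :: "('a, 'b) monoid_scheme" and H :: "'a set" and n :: nat
  assumes "group G"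
    and "H \<lhd> G"
    and "finite (rcosets\<^bsub>G\<^esub> H)"
    and "G\<lparr>carrier := H\<rparr> \<cong> Zn_group n"
  shows "\<exists>S. finite S \<and> S \<subseteq> carrier G \<and> (\<forall>s\<in>S. inv\<^bsub>G\<^esub> s \<in> S) \<and> \<one>\<^bsub>G\<^esub> \<notin> S
           \<and> generate G S = carrier G
           \<and> (\<forall>h\<in>H - {\<one>\<^bsub>G\<^esub>}. curvature G S h = 0)"
  using group.main_in[OF assms(1) assms(2-4)] .

end
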